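(* Let $A,B$ be an LR pair on $V$ with parameter sequence $(\varphi_i)_{i=1}^d$ and let $E_i$ ($0\le i\le d$) be the projection onto the $i$-th component of the $(A,B)$-decomposition. Define $$\Psi=\sum_{i=0}^d\frac{\varphi_1\varphi_2\cdots\varphi_i}{\varphi_d\varphi_{d-1}\cdots\varphi_{d-i+1}}E_i .$$ Then $\Psi$ is invertible, each of $A,\Psi^{-1}B\Psi$ and $\Psi A\Psi^{-1},B$ is an LR pair on $V$, and the three LR pairs $$A,\ \Psi^{-1}B\Psi\qquad\qquad B,\ A\qquad\qquad \Psi A\Psi^{-1},\ B$$ are mutually isomorphic.
   Context: Let $V$ be a vector space over a field $\mathbb F$ with $\dim V=d+1$. A decomposition of $V$ is a sequence $(V_i)_{i=0}^d$ of one-dimensional subspaces with $V=\bigoplus_{i=0}^d V_i$. An element $X\in\mathrm{End}(V)$ lowers the decomposition if $XV_i=V_{i-1}$ for $1\le i\le d$ and $XV_0=0$; it raises it if $XV_i=V_{i+1}$ for $0\le i\le d-1$ and $XV_d=0$. An ordered pair $A,B\in\mathrm{End}(V)$ is an LR pair on $V$ if some decomposition of $V$ is lowered by $A$ and raised by $B$; it is unique, the $(A,B)$-decomposition $(V_i)$. The projection $E_i$ maps $V_i$ identically and kills $V_j$ for $j\ne i$. For $1\le i\le d$, $V_i$ is invariant under $BA$ with nonzero eigenvalue $\varphi_i$ (the parameter sequence). LR pairs $A,B$ and $A',B'$ on $V$ are isomorphic if there is an invertible $\sigma\in\mathrm{End}(V)$ with $\sigma A=A'\sigma$, $\sigma B=B'\sigma$.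 *)

theory Defs
  imports "HOL.Vector_Spaces"
begin

definition is_decomposition ::
  "('a::field \<Rightarrow> 'v::ab_group_add \<Rightarrow> 'v) \<Rightarrow> nat \<Rightarrow> (nat \<Rightarrow> 'v set) \<Rightarrow> bool" where
  "is_decomposition scale d Vs \<longleftrightarrow>
     (\<forall>i\<le>d. module.subspace scale (Vs i) \<and> vector_space.dim scale (Vs i) = 1) \<and>
     (\<forall>v. \<exists>ws. (\<forall>j\<le>d. ws j \<in> Vs j) \<and> v = (\<Sum>j\<in>{0..d}. ws j)) \<and>
     (\<forall>ws. (\<forall>j\<le>d. ws j \<in> Vs j) \<and> (\<Sum>j\<in>{0..d}. ws j) = 0 \<longrightarrow> (\<forall>j\<le>d. ws j = 0))"

definition lowers :: "nat \<Rightarrow> ('v::zero \<Rightarrow> 'v) \<Rightarrow> (nat \<Rightarrow> 'v set) \<Rightarrow> bool" where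
  "lowers d X Vs \<longleftrightarrow> (\<forall>i\<in>{1..d}. X ` Vs i = Vs (i - 1)) \<and> X ` Vs 0 = {0}"

definition raises :: "nat \<Rightarrow> ('v::zero \<Rightarrow> 'v) \<Rightarrow> (nat \<Rightarrow> 'v set) \<Rightarrow> bool" where
  "raises d X Vs \<longleftrightarrow> (\<forall>i<d. X ` Vs i = Vs (i + 1)) \<and> X ` Vs d = {0}"

text \<open>LR pair on V, where dim V = d + 1 (forced by the decomposition).\<close>
definition LR_pair ::
  "('a::field \<Rightarrow> 'v::ab_group_add \<Rightarrow> 'v) \<Rightarrow> nat \<Rightarrow> ('v \<Rightarrow> 'v) \<Rightarrow> ('v \<Rightarrow> 'v) \<Rightarrow> bool" where
  "LR_pair scale d A B \<longleftrightarrow> Vector_Spaces.linear scale scale A \<and> Vector_Spaces.linear scale scale B \<and>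
     (\<exists>Vs. is_decomposition scale d Vs \<and> lowers d A Vs \<and> raises d B Vs)"

definition LR_iso ::
  "('a::field \<Rightarrow> 'v::ab_group_add \<Rightarrow> 'v) \<Rightarrow> nat \<Rightarrow> ('v \<Rightarrow> 'v) \<Rightarrow> ('v \<Rightarrow> 'v)
     \<Rightarrow> ('v \<Rightarrow> 'v) \<Rightarrow> ('v \<Rightarrow> 'v) \<Rightarrow> bool" where
  "LR_iso scale d A B A' B' \<longleftrightarrow> LR_pair scale d A B \<and> LR_pair scale d A' B' \<and>
     (\<exists>\<sigma>. Vector_Spaces.linear scale scale \<sigma> \<and> bij \<sigma> \<and> \<sigma> \<circ> A = A' \<circ> \<sigma> \<and> \<sigma> \<circ> B = B' \<circ> \<sigma>)"

definition proj :: "nat \<Rightarrow> (nat \<Rightarrow> 'v::comm_monoid_add set) \<Rightarrow> nat \<Rightarrow> 'v \<Rightarrow> 'v" where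
  "proj d Vs i v = (THE w. \<exists>ws. (\<forall>j\<le>d. ws j \<in> Vs j) \<and> v = (\<Sum>j\<in>{0..d}. ws j) \<and> w = ws i)"

end

theory Submission
  imports Defs
begin


context vector_space begin

lemma lin_add: "Vector_Spaces.linear scale scale f \<Longrightarrow> f (x + y) = f x + f y"
  by (simp add: linear_iff)
lemma lin_scale: "Vector_Spaces.linear scale scale f \<Longrightarrow> f (scale c x) = scale c (f x)"
  by (simp add: linear_iff)
lemma lin_0: "Vector_Spaces.linear scale scale f \<Longrightarrow> f 0 = 0"
  using lin_scale[of f 0 0] by simp
lemma lin_sum: "Vector_Spaces.linear scale scale f \<Longrightarrow> f (sum g A) = (\<Sum>x\<in>A. f (g x))"
  using additive.sum[of f] by (simp add: additive_def linear_iff)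
lemma lin_comp: "Vector_Spaces.linear scale scale f \<Longrightarrow> Vector_Spaces.linear scale scale g
   \<Longrightarrow> Vector_Spaces.linear scale scale (f \<circ> g)"
  by (rule Vector_Spaces.linear_compose)
lemma lin_id: "Vector_Spaces.linear scale scale id"
  by (simp add: linear_iff vector_space_axioms)

lemma dec_sub: "is_decomposition scale d Vs \<Longrightarrow> i \<le> d \<Longrightarrow> subspace (Vs i)"
  by (simp add: is_decomposition_def)

lemma proj_unique:
  assumes D: "is_decomposition scale d Vs" and ws: "\<forall>j\<le>d. ws j \<in> Vs j"
    and v: "v = (\<Sum>j\<in>{0..d}. ws j)" and i: "i \<le> d"
  shows "proj d Vs i v = ws i"
  unfolding proj_def
proof (rule the_equality)
  show "\<exists>ws'. (\<forall>j\<le>d. ws' j \<in> Vs j) \<and> v = (\<Sum>j\<in>{0..d}. ws' j) \<and> ws i = ws' i"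
    using ws v by blast
next
  fix w assume "\<exists>ws'. (\<forall>j\<le>d. ws' j \<in> Vs j) \<and> v = (\<Sum>j\<in>{0..d}. ws' j) \<and> w = ws' i"
  then obtain ws' where ws': "\<forall>j\<le>d. ws' j \<in> Vs j" "v = (\<Sum>j\<in>{0..d}. ws' j)" "w = ws' i" by blast
  have m: "\<forall>j\<le>d. ws' j - ws j \<in> Vs j" using ws ws' dec_sub[OF D] subspace_diff by blast
  have s0: "(\<Sum>j\<in>{0..d}. ws' j - ws j) = 0" using ws' v by (simp add: sum_subtractf)
  have U: "\<forall>ws. (\<forall>j\<le>d. ws j \<in> Vs j) \<and> (\<Sum>j\<in>{0..d}. ws j) = 0 \<longrightarrow> (\<forall>j\<le>d. ws j = 0)"
    using D unfolding is_decomposition_def by (elim conjE)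
  have "\<forall>j\<le>d. ws' j - ws j = 0" using spec[OF U, of "\<lambda>j. ws' j - ws j"] m s0 by blast
  then show "w = ws i" using ws' i by auto
qed

lemma proj_in_sum:
  assumes D: "is_decomposition scale d Vs"
  shows "(\<forall>i\<le>d. proj d Vs i v \<in> Vs i) \<and> v = (\<Sum>j\<in>{0..d}. proj d Vs j v)"
proof -
  obtain ws where ws: "\<forall>j\<le>d. ws j \<in> Vs j" "v = (\<Sum>j\<in>{0..d}. ws j)"
    using D unfolding is_decomposition_def by blast
  have "\<forall>i\<le>d. proj d Vs i v = ws i" using proj_unique[OF D ws] by blast
  then show ?thesis using ws by simp
qed

lemma proj_self:
  assumes D: "is_decomposition scale d Vs" and w: "w \<in> Vs i" and i: "i \<le> d" and j: "j \<le> d"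
  shows "proj d Vs j w = (if j = i then w else 0)"
proof -
  have "proj d Vs j w = (\<lambda>k. if k = i then w else 0) j"
    by (rule proj_unique[OF D]) (use w i j dec_sub[OF D] subspace_0 in auto)
  then show ?thesis by simp
qed

lemma proj_add:
  assumes D: "is_decomposition scale d Vs" and i: "i \<le> d"
  shows "proj d Vs i (u + v) = proj d Vs i u + proj d Vs i v"
proof -
  have "proj d Vs i (u + v) = (\<lambda>k. proj d Vs k u + proj d Vs k v) i"
  proof (rule proj_unique[OF D _ _ i])
    show "\<forall>j\<le>d. proj d Vs j u + proj d Vs j v \<in> Vs j"
      using proj_in_sum[OF D] dec_sub[OF D] subspace_add by blast
    show "u + v = (\<Sum>j\<in>{0..d}. proj d Vs j u + proj d Vs j v)"
      using proj_in_sum[OF D, of u] proj_in_sum[OF D, of v] by (simp add: sum.distrib)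
  qed
  then show ?thesis by simp
qed

lemma proj_scale:
  assumes D: "is_decomposition scale d Vs" and i: "i \<le> d"
  shows "proj d Vs i (scale c u) = scale c (proj d Vs i u)"
proof -
  have "proj d Vs i (scale c u) = (\<lambda>k. scale c (proj d Vs k u)) i"
  proof (rule proj_unique[OF D _ _ i])
    show "\<forall>j\<le>d. scale c (proj d Vs j u) \<in> Vs j"
      using proj_in_sum[OF D] dec_sub[OF D] subspace_scale by blast
    show "scale c u = (\<Sum>j\<in>{0..d}. scale c (proj d Vs j u))"
      using proj_in_sum[OF D, of u] by (metis scale_sum_right)
  qed
  then show ?thesis by simp
qed

lemma proj_linear:
  assumes D: "is_decomposition scale d Vs" and i: "i \<le> d"
  shows "Vector_Spaces.linear scale scale (proj d Vs i)"
  using proj_add[OF D i] proj_scale[OF D i] by (simp add: linear_iff vector_space_axioms)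

lemma linear_eq_dec:
  assumes D: "is_decomposition scale d Vs"
    and f: "Vector_Spaces.linear scale scale f" and g: "Vector_Spaces.linear scale scale g"
    and eq: "\<And>i w. i \<le> d \<Longrightarrow> w \<in> Vs i \<Longrightarrow> f w = g w"
  shows "f = g"
proof
  fix v
  have v: "v = (\<Sum>j\<in>{0..d}. proj d Vs j v)" using proj_in_sum[OF D] by blast
  have "f v = (\<Sum>j\<in>{0..d}. f (proj d Vs j v))" by (subst v) (rule lin_sum[OF f])
  also have "\<dots> = (\<Sum>j\<in>{0..d}. g (proj d Vs j v))"
    using eq proj_in_sum[OF D] by (intro sum.cong) auto
  also have "\<dots> = g v" by (subst (2) v) (rule lin_sum[OF g, symmetric])
  finally show "f v = g v" .
qed

definition diagm :: "nat \<Rightarrow> (nat \<Rightarrow> 'b set) \<Rightarrow> (nat \<Rightarrow> 'a) \<Rightarrow> 'b \<Rightarrow> 'b" where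
  "diagm d Vs c = (\<lambda>v. \<Sum>i\<in>{0..d}. scale (c i) (proj d Vs i v))"

lemma diagm_linear:
  assumes D: "is_decomposition scale d Vs"
  shows "Vector_Spaces.linear scale scale (diagm d Vs c)"
proof -
  have a: "diagm d Vs c (u + v) = diagm d Vs c u + diagm d Vs c v" for u v
  proof -
    have "diagm d Vs c (u + v) = (\<Sum>i\<in>{0..d}. scale (c i) (proj d Vs i u) + scale (c i) (proj d Vs i v))"
      unfolding diagm_def by (rule sum.cong) (simp_all add: proj_add[OF D] scale_right_distrib)
    then show ?thesis by (simp add: sum.distrib diagm_def)
  qed
  have s: "diagm d Vs c (scale a u) = scale a (diagm d Vs c u)" for a u
  proof -
    have "diagm d Vs c (scale a u) = (\<Sum>i\<in>{0..d}. scale a (scale (c i) (proj d Vs i u)))"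
      unfolding diagm_def by (rule sum.cong) (simp_all add: proj_scale[OF D] mult.commute)
    then show ?thesis by (simp add: scale_sum_right diagm_def)
  qed
  show ?thesis using a s by (simp add: linear_iff vector_space_axioms)
qed

lemma diagm_on:
  assumes D: "is_decomposition scale d Vs" and w: "w \<in> Vs i" and i: "i \<le> d"
  shows "diagm d Vs c w = scale (c i) w"
proof -
  have "diagm d Vs c w = (\<Sum>j\<in>{0..d}. if j = i then scale (c i) w else 0)"
    unfolding diagm_def using proj_self[OF D w i] by (intro sum.cong) auto
  also have "\<dots> = scale (c i) w" using i by (simp add: sum.delta)
  finally show ?thesis .
qed

lemma diagm_inv:
  assumes D: "is_decomposition scale d Vs" and c: "\<forall>i\<le>d. c i \<noteq> 0"
  shows "bij (diagm d Vs c) \<and> inv (diagm d Vs c) = diagm d Vs (\<lambda>i. inverse (c i))"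
proof -
  have 1: "diagm d Vs c \<circ> diagm d Vs (\<lambda>i. inverse (c i)) = id"
  proof (rule linear_eq_dec[OF D lin_comp[OF diagm_linear[OF D] diagm_linear[OF D]] lin_id])
    fix i w assume i: "i \<le> d" and w: "w \<in> Vs i"
    have w': "scale (inverse (c i)) w \<in> Vs i" using w subspace_scale dec_sub[OF D i] by blast
    show "(diagm d Vs c \<circ> diagm d Vs (\<lambda>i. inverse (c i))) w = id w"
      using diagm_on[OF D w i] diagm_on[OF D w' i] c i by simp
  qed
  have 2: "diagm d Vs (\<lambda>i. inverse (c i)) \<circ> diagm d Vs c = id"
  proof (rule linear_eq_dec[OF D lin_comp[OF diagm_linear[OF D] diagm_linear[OF D]] lin_id])
    fix i w assume i: "i \<le> d" and w: "w \<in> Vs i"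
    have w': "scale (c i) w \<in> Vs i" using w subspace_scale dec_sub[OF D i] by blast
    show "(diagm d Vs (\<lambda>i. inverse (c i)) \<circ> diagm d Vs c) w = id w"
      using diagm_on[OF D w i, of c] diagm_on[OF D w' i, of "\<lambda>i. inverse (c i)"] c i by simp
  qed
  show ?thesis using o_bij[OF 2 1] inv_unique_comp[OF 1 2] by simp
qed

end

context vector_space begin

lemma dec_dim: "is_decomposition scale d Vs \<Longrightarrow> i \<le> d \<Longrightarrow> dim (Vs i) = 1"
  by (simp add: is_decomposition_def)

lemma one_dim:
  assumes "subspace S" "dim S = 1"
  obtains e where "e \<in> S" "e \<noteq> 0" "\<forall>w\<in>S. \<exists>t. w = scale t e"
proof -
  obtain Bs where Bs: "Bs \<subseteq> S" "independent Bs" "S \<subseteq> span Bs" "card Bs = dim S"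
    by (rule basis_exists)
  then obtain e where e: "Bs = {e}" using assms card_1_singletonE by metis
  then have "e \<noteq> 0" using Bs(2) by simp
  moreover have "\<forall>w\<in>S. \<exists>t. w = scale t e" using Bs(3) e span_singleton by auto
  ultimately show ?thesis using that Bs(1) e by auto
qed

lemma one_dim2:
  assumes "subspace S" "dim S = 1" "b \<in> S" "b \<noteq> 0" "w \<in> S"
  shows "\<exists>t. w = scale t b"
proof -
  obtain e where e: "e \<in> S" "e \<noteq> 0" "\<forall>w\<in>S. \<exists>t. w = scale t e" using one_dim assms by blast
  obtain s where s: "b = scale s e" using e assms by blast
  obtain t where t: "w = scale t e" using e assms by blast
  have "s \<noteq> 0" using s assms by auto
  then have "w = scale (t / s) b" using s t by simp
  then show ?thesis by blast
qed

lemma dec_nz: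
  assumes D: "is_decomposition scale d Vs" and i: "i \<le> d"
  shows "\<exists>e\<in>Vs i. e \<noteq> 0"
proof -
  obtain e where "e \<in> Vs i" "e \<noteq> 0"
    using one_dim[OF dec_sub[OF D i] dec_dim[OF D i]] by blast
  then show ?thesis by blast
qed

lemma dec_rep:
  assumes D: "is_decomposition scale d Vs" and i: "i \<le> d" and b: "b \<in> Vs i" "b \<noteq> 0"
    and w: "w \<in> Vs i"
  shows "\<exists>t. w = scale t b"
  by (rule one_dim2[OF dec_sub[OF D i] dec_dim[OF D i] b w])

definition LRd where
  "LRd d X Y Ws \<psi> \<longleftrightarrow> Vector_Spaces.linear scale scale X \<and> Vector_Spaces.linear scale scale Y \<and>
     is_decomposition scale d Ws \<and> lowers d X Ws \<and> raises d Y Ws \<and>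
     (\<forall>i\<in>{1..d}. \<forall>v\<in>Ws i. Y (X v) = scale (\<psi> i) v)"

lemma LR_basis:
  assumes L: "LRd d X Y Ws \<psi>"
  obtains b where "\<forall>i\<le>d. b i \<in> Ws i \<and> b i \<noteq> 0" "\<forall>i<d. Y (b i) = b (Suc i)" "Y (b d) = 0"
    "\<forall>i\<in>{1..d}. X (b i) = scale (\<psi> i) (b (i - 1))" "X (b 0) = 0"
proof -
  have lX: "Vector_Spaces.linear scale scale X" and lY: "Vector_Spaces.linear scale scale Y"
    and D: "is_decomposition scale d Ws" and low: "lowers d X Ws" and rai: "raises d Y Ws"
    and par: "\<forall>i\<in>{1..d}. \<forall>v\<in>Ws i. Y (X v) = scale (\<psi> i) v"
    using L by (auto simp: LRd_def)
  obtain e where e: "e \<in> Ws 0" "e \<noteq> 0"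
    using dec_nz[OF D, of 0] by blast
  define b where "b i = (Y^^i) e" for i
  have bS: "b (Suc i) = Y (b i)" for i by (simp add: b_def)
  have B1: "i \<le> d \<Longrightarrow> b i \<in> Ws i \<and> b i \<noteq> 0" for i
  proof (induction i)
    case 0 then show ?case using e by (simp add: b_def)
  next
    case (Suc i)
    then have IH: "b i \<in> Ws i" "b i \<noteq> 0" "i < d" by auto
    have img: "Y ` Ws i = Ws (Suc i)" using rai IH(3) by (simp add: raises_def)
    have mem: "b (Suc i) \<in> Ws (Suc i)" using img IH bS by blast
    moreover have "b (Suc i) \<noteq> 0"
    proof
      assume z: "b (Suc i) = 0"
      obtain u where u: "u \<in> Ws (Suc i)" "u \<noteq> 0"
        using dec_nz[OF D Suc.prems] by blast
      then obtain w where w: "w \<in> Ws i" "u = Y w" using img by blast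
      obtain t where "w = scale t (b i)"
        using dec_rep[OF D _ IH(1) IH(2) w(1)] IH(3) by auto
      then have "u = scale t (Y (b i))" using w lin_scale[OF lY] by simp
      then have "u = scale t (b (Suc i))" using bS by metis
      with z u show False by simp
    qed
    ultimately show ?case by simp
  qed
  have B2: "\<forall>i<d. Y (b i) = b (Suc i)" using bS by metis
  have "Y ` Ws d = {0}" using rai by (simp add: raises_def)
  then have B3: "Y (b d) = 0" using B1[of d] by blast
  have B4: "X (b i) = scale (\<psi> i) (b (i - 1))" if i: "i \<in> {1..d}" for i
  proof -
    have lowi: "\<forall>i\<in>{1..d}. X ` Ws i = Ws (i - 1)" using low by (simp add: lowers_def)
    have img: "X ` Ws i = Ws (i - 1)" using lowi i by blast
    have i1: "i - 1 \<le> d" "i \<le> d" using i by auto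
    have bi1: "b (i - 1) \<in> Ws (i - 1)" "b (i - 1) \<noteq> 0" using B1[OF i1(1)] by auto
    have bi0: "b i \<in> Ws i" "b i \<noteq> 0" using B1[OF i1(2)] by auto
    have "X (b i) \<in> Ws (i - 1)" using img bi0 by blast
    then obtain s where s: "X (b i) = scale s (b (i - 1))"
      using dec_rep[OF D i1(1) bi1] by blast
    have bi: "b i = Y (b (i - 1))" using bS[of "i - 1"] i by simp
    have "Y (X (b i)) = scale (\<psi> i) (b i)" using par i bi0 by blast
    moreover have "Y (X (b i)) = scale s (b i)"
    proof -
      have "Y (X (b i)) = Y (scale s (b (i - 1)))" using s by (rule arg_cong)
      also have "\<dots> = scale s (Y (b (i - 1)))" by (rule lin_scale[OF lY])
      also have "\<dots> = scale s (b i)" by (simp only: bi)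
      finally show ?thesis .
    qed
    ultimately have "\<psi> i = s" using bi0 by simp
    then show ?thesis using s by simp
  qed
  have "X ` Ws 0 = {0}" using low by (simp add: lowers_def)
  then have B5: "X (b 0) = 0" using B1[of 0] by blast
  have B1': "\<forall>i\<le>d. b i \<in> Ws i \<and> b i \<noteq> 0" using B1 by blast
  have B4': "\<forall>i\<in>{1..d}. X (b i) = scale (\<psi> i) (b (i - 1))" using B4 by blast
  show ?thesis by (rule that[OF B1' B2 B3 B4' B5])
qed

lemma LR_param_nz:
  assumes L: "LRd d X Y Ws \<psi>" and i: "i \<in> {1..d}"
  shows "\<psi> i \<noteq> 0"
proof
  assume z: "\<psi> i = 0"
  have lX: "Vector_Spaces.linear scale scale X" and D: "is_decomposition scale d Ws"
    and low: "lowers d X Ws" using L by (auto simp: LRd_def)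
  obtain b where b: "\<forall>i\<le>d. b i \<in> Ws i \<and> b i \<noteq> 0" "\<forall>i<d. Y (b i) = b (Suc i)" "Y (b d) = 0"
    "\<forall>i\<in>{1..d}. X (b i) = scale (\<psi> i) (b (i - 1))" "X (b 0) = 0"
    by (rule LR_basis[OF L])
  have i1: "i - 1 \<le> d" "i \<le> d" using i by auto
  have bi1: "b (i - 1) \<in> Ws (i - 1)" "b (i - 1) \<noteq> 0" using b(1) i1 by auto
  have bi0: "b i \<in> Ws i" "b i \<noteq> 0" using b(1) i1 by auto
  have lowi: "\<forall>i\<in>{1..d}. X ` Ws i = Ws (i - 1)" using low by (simp add: lowers_def)
  have "b (i - 1) \<in> X ` Ws i" using lowi i bi1 by blast
  then obtain w where w: "w \<in> Ws i" "b (i - 1) = X w" by blast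
  obtain t where t: "w = scale t (b i)"
    using dec_rep[OF D i1(2) bi0 w(1)] by blast
  have xb: "X (b i) = 0" using b(4) i z by simp
  have "b (i - 1) = X (scale t (b i))" using w(2) t by simp
  also have "\<dots> = scale t (X (b i))" by (rule lin_scale[OF lX])
  also have "\<dots> = 0" by (simp add: xb)
  finally show False using bi1 by simp
qed

definition coord where
  "coord d Ws b i v = (THE t. proj d Ws i v = scale t (b i))"

lemma coord_eq:
  assumes D: "is_decomposition scale d Ws" and i: "i \<le> d" and b: "b i \<in> Ws i" "b i \<noteq> 0"
  shows "proj d Ws i v = scale (coord d Ws b i v) (b i)"
proof -
  have "\<exists>t. proj d Ws i v = scale t (b i)"
    using dec_rep[of d Ws i "b i" "proj d Ws i v", OF D i b] i proj_in_sum[OF D] by blast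
  then have "\<exists>!t. proj d Ws i v = scale t (b i)" using b by auto
  then show ?thesis unfolding coord_def by (rule theI')
qed

lemma coord_uniq:
  assumes D: "is_decomposition scale d Ws" and i: "i \<le> d" and b: "b i \<in> Ws i" "b i \<noteq> 0"
    and e: "proj d Ws i v = scale t (b i)"
  shows "coord d Ws b i v = t"
  using coord_eq[of d Ws i b v, OF D i b] e b by simp

definition tr where
  "tr d Ws b b' v = (\<Sum>i\<in>{0..d}. scale (coord d Ws b i v) (b' i))"

lemma tr_linear:
  assumes D: "is_decomposition scale d Ws" and hb: "\<forall>i\<le>d. b i \<in> Ws i \<and> b i \<noteq> 0"
  shows "Vector_Spaces.linear scale scale (tr d Ws b b')"
proof -
  have ca: "coord d Ws b i (u + v) = coord d Ws b i u + coord d Ws b i v" if "i \<le> d" for i u v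
    using coord_uniq[of d Ws i b "u + v", OF D that] hb that proj_add[OF D that]
      coord_eq[of d Ws i b u, OF D that] coord_eq[of d Ws i b v, OF D that]
    by (simp add: scale_left_distrib)
  have cs: "coord d Ws b i (scale c u) = c * coord d Ws b i u" if "i \<le> d" for i c u
    using coord_uniq[of d Ws i b "scale c u", OF D that] hb that proj_scale[OF D that]
      coord_eq[of d Ws i b u, OF D that]
    by simp
  have a: "tr d Ws b b' (u + v) = tr d Ws b b' u + tr d Ws b b' v" for u v
  proof -
    have "tr d Ws b b' (u + v) = (\<Sum>i\<in>{0..d}. scale (coord d Ws b i u) (b' i) + scale (coord d Ws b i v) (b' i))"
      unfolding tr_def by (rule sum.cong) (simp_all add: ca scale_left_distrib)
    then show ?thesis by (simp add: sum.distrib tr_def)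
  qed
  have s: "tr d Ws b b' (scale c u) = scale c (tr d Ws b b' u)" for c u
  proof -
    have "tr d Ws b b' (scale c u) = (\<Sum>i\<in>{0..d}. scale c (scale (coord d Ws b i u) (b' i)))"
      unfolding tr_def by (rule sum.cong) (simp_all add: cs)
    then show ?thesis by (simp add: scale_sum_right tr_def)
  qed
  show ?thesis using a s by (simp add: linear_iff vector_space_axioms)
qed

lemma tr_basis:
  assumes D: "is_decomposition scale d Ws" and hb: "\<forall>i\<le>d. b i \<in> Ws i \<and> b i \<noteq> 0" and k: "k \<le> d"
  shows "tr d Ws b b' (scale t (b k)) = scale t (b' k)"
proof -
  have c: "coord d Ws b i (scale t (b k)) = (if i = k then t else 0)" if i: "i \<le> d" for i
  proof (rule coord_uniq[of d Ws i b, OF D i])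
    show "b i \<in> Ws i" "b i \<noteq> 0" using hb i by auto
    have "scale t (b k) \<in> Ws k" using hb k subspace_scale dec_sub[OF D k] by blast
    then show "proj d Ws i (scale t (b k)) = scale (if i = k then t else 0) (b i)"
      using proj_self[OF D _ k i] by auto
  qed
  have "tr d Ws b b' (scale t (b k)) = (\<Sum>i\<in>{0..d}. if i = k then scale t (b' k) else 0)"
    unfolding tr_def by (intro sum.cong) (auto simp: c)
  also have "\<dots> = scale t (b' k)" using k by (simp add: sum.delta)
  finally show ?thesis .
qed

lemma LR_iso_gen:
  assumes L: "LRd d X Y Ws \<psi>" and L': "LRd d X' Y' Ws' \<psi>"
  shows "\<exists>\<sigma>. Vector_Spaces.linear scale scale \<sigma> \<and> bij \<sigma> \<and> \<sigma> \<circ> X = X' \<circ> \<sigma> \<and> \<sigma> \<circ> Y = Y' \<circ> \<sigma>"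
proof -
  have lX: "Vector_Spaces.linear scale scale X" and lY: "Vector_Spaces.linear scale scale Y"
    and D: "is_decomposition scale d Ws" using L by (auto simp: LRd_def)
  have lX': "Vector_Spaces.linear scale scale X'" and lY': "Vector_Spaces.linear scale scale Y'"
    and D': "is_decomposition scale d Ws'" using L' by (auto simp: LRd_def)
  obtain b where b: "\<forall>i\<le>d. b i \<in> Ws i \<and> b i \<noteq> 0" "\<forall>i<d. Y (b i) = b (Suc i)" "Y (b d) = 0"
    "\<forall>i\<in>{1..d}. X (b i) = scale (\<psi> i) (b (i - 1))" "X (b 0) = 0"
    by (rule LR_basis[OF L])
  obtain b' where b': "\<forall>i\<le>d. b' i \<in> Ws' i \<and> b' i \<noteq> 0" "\<forall>i<d. Y' (b' i) = b' (Suc i)" "Y' (b' d) = 0"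
    "\<forall>i\<in>{1..d}. X' (b' i) = scale (\<psi> i) (b' (i - 1))" "X' (b' 0) = 0"
    by (rule LR_basis[OF L'])
  define \<sigma> where "\<sigma> = tr d Ws b b'"
  define \<sigma>' where "\<sigma>' = tr d Ws' b' b"
  have ls: "Vector_Spaces.linear scale scale \<sigma>" unfolding \<sigma>_def by (rule tr_linear[OF D b(1)])
  have ls': "Vector_Spaces.linear scale scale \<sigma>'" unfolding \<sigma>'_def by (rule tr_linear[OF D' b'(1)])
  have sb: "\<sigma> (scale t (b k)) = scale t (b' k)" if "k \<le> d" for k t
    unfolding \<sigma>_def by (rule tr_basis[OF D b(1) that])
  have sb': "\<sigma>' (scale t (b' k)) = scale t (b k)" if "k \<le> d" for k t
    unfolding \<sigma>'_def by (rule tr_basis[OF D' b'(1) that])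
  have rep: "\<exists>t. w = scale t (b i)" if "i \<le> d" "w \<in> Ws i" for i w
  proof -
    have "b i \<in> Ws i" "b i \<noteq> 0" using b(1) that by auto
    then show ?thesis using dec_rep[OF D that(1) _ _ that(2)] by blast
  qed
  have rep': "\<exists>t. w = scale t (b' i)" if "i \<le> d" "w \<in> Ws' i" for i w
  proof -
    have "b' i \<in> Ws' i" "b' i \<noteq> 0" using b'(1) that by auto
    then show ?thesis using dec_rep[OF D' that(1) _ _ that(2)] by blast
  qed
  have 1: "\<sigma>' \<circ> \<sigma> = id"
  proof (rule linear_eq_dec[OF D lin_comp[OF ls' ls] lin_id])
    fix i w assume i: "i \<le> d" and w: "w \<in> Ws i"
    then obtain t where t: "w = scale t (b i)" using rep by blast
    show "(\<sigma>' \<circ> \<sigma>) w = id w" unfolding t o_def id_def sb[OF i] sb'[OF i] ..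
  qed
  have 2: "\<sigma> \<circ> \<sigma>' = id"
  proof (rule linear_eq_dec[OF D' lin_comp[OF ls ls'] lin_id])
    fix i w assume i: "i \<le> d" and w: "w \<in> Ws' i"
    then obtain t where t: "w = scale t (b' i)" using rep' by blast
    show "(\<sigma> \<circ> \<sigma>') w = id w" unfolding t o_def id_def sb[OF i] sb'[OF i] ..
  qed
  have 3: "\<sigma> \<circ> X = X' \<circ> \<sigma>"
  proof (rule linear_eq_dec[OF D lin_comp[OF ls lX] lin_comp[OF lX' ls]])
    fix i w assume i: "i \<le> d" and w: "w \<in> Ws i"
    then obtain t where t: "w = scale t (b i)" using rep by blast
    show "(\<sigma> \<circ> X) w = (X' \<circ> \<sigma>) w"
    proof (cases "i = 0")
      case True
      have "(\<sigma> \<circ> X) w = \<sigma> (scale t (X (b 0)))" unfolding t True o_def lin_scale[OF lX] ..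
      also have "\<dots> = 0" unfolding b(5) scale_zero_right lin_0[OF ls] ..
      also have "\<dots> = scale t (X' (b' 0))" unfolding b'(5) scale_zero_right ..
      also have "\<dots> = (X' \<circ> \<sigma>) w" unfolding t True o_def sb[OF le0] lin_scale[OF lX'] ..
      finally show ?thesis .
    next
      case False
      then have i1: "i \<in> {1..d}" "i - 1 \<le> d" using i by auto
      have xb: "X (b i) = scale (\<psi> i) (b (i - 1))" using b(4) i1 by blast
      have xb': "X' (b' i) = scale (\<psi> i) (b' (i - 1))" using b'(4) i1 by blast
      have "(\<sigma> \<circ> X) w = \<sigma> (scale (t * \<psi> i) (b (i - 1)))"
        unfolding t o_def lin_scale[OF lX] xb scale_scale ..
      also have "\<dots> = scale (t * \<psi> i) (b' (i - 1))" by (rule sb[OF i1(2)])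
      also have "\<dots> = (X' \<circ> \<sigma>) w"
        unfolding t o_def sb[OF i] lin_scale[OF lX'] xb' scale_scale ..
      finally show ?thesis .
    qed
  qed
  have 4: "\<sigma> \<circ> Y = Y' \<circ> \<sigma>"
  proof (rule linear_eq_dec[OF D lin_comp[OF ls lY] lin_comp[OF lY' ls]])
    fix i w assume i: "i \<le> d" and w: "w \<in> Ws i"
    then obtain t where t: "w = scale t (b i)" using rep by blast
    show "(\<sigma> \<circ> Y) w = (Y' \<circ> \<sigma>) w"
    proof (cases "i = d")
      case True
      have "(\<sigma> \<circ> Y) w = \<sigma> (scale t (Y (b d)))" unfolding t True o_def lin_scale[OF lY] ..
      also have "\<dots> = 0" unfolding b(3) scale_zero_right lin_0[OF ls] ..
      also have "\<dots> = scale t (Y' (b' d))" unfolding b'(3) scale_zero_right ..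
      also have "\<dots> = (Y' \<circ> \<sigma>) w" unfolding t True o_def sb[OF order_refl] lin_scale[OF lY'] ..
      finally show ?thesis .
    next
      case False
      then have i1: "i < d" "Suc i \<le> d" using i by auto
      have yb: "Y (b i) = b (Suc i)" using b(2) i1 by blast
      have yb': "Y' (b' i) = b' (Suc i)" using b'(2) i1 by blast
      have "(\<sigma> \<circ> Y) w = \<sigma> (scale t (b (Suc i)))"
        unfolding t o_def lin_scale[OF lY] yb ..
      also have "\<dots> = scale t (b' (Suc i))" by (rule sb[OF i1(2)])
      also have "\<dots> = (Y' \<circ> \<sigma>) w"
        unfolding t o_def sb[OF i] lin_scale[OF lY'] yb' ..
      finally show ?thesis .
    qed
  qed
  show ?thesis using ls o_bij[OF 1 2] 3 4 by blast
qed

end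

context vector_space begin

lemma img_scale:
  assumes S: "subspace S" and k: "k \<noteq> 0" and f: "\<forall>w\<in>T. f w = scale k (g w)" and g: "g ` T = S"
  shows "f ` T = S"
proof
  show "f ` T \<subseteq> S" using f g subspace_scale[OF S] by auto
  show "S \<subseteq> f ` T"
  proof
    fix s assume s: "s \<in> S"
    have "scale (inverse k) s \<in> S" using subspace_scale[OF S s] .
    then obtain w where w: "w \<in> T" "scale (inverse k) s = g w" using g by blast
    have "f w = scale k (scale (inverse k) s)" using f w by simp
    also have "\<dots> = s" using k by simp
    finally show "s \<in> f ` T" using w by force
  qed
qed

lemma img_zero:
  assumes "\<forall>w\<in>T. f w = 0" "0 \<in> T"
  shows "f ` T = {0}"
  using assms by force

lemma LRd_pair: "LRd d X Y Ws \<psi> \<Longrightarrow> LR_pair scale d X Y"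
  unfolding LRd_def LR_pair_def by blast

lemma LRd_iso:
  assumes "LRd d X Y Ws \<psi>" "LRd d X' Y' Ws' \<psi>" shows "LR_iso scale d X Y X' Y'"
  unfolding LR_iso_def using LRd_pair[OF assms(1)] LRd_pair[OF assms(2)] LR_iso_gen[OF assms] by blast

lemma rev_dec:
  assumes D: "is_decomposition scale d Vs"
  shows "is_decomposition scale d (\<lambda>i. Vs (d - i))"
proof -
  have rv: "(\<Sum>j\<in>{0..d}. g j) = (\<Sum>j\<in>{0..d}. g (d - j))" for g :: "nat \<Rightarrow> 'b"
  proof -
    have "sum g {0..d} = sum (\<lambda>i. g (d + 0 - i)) {0..d}" by (rule sum.atLeastAtMost_rev)
    then show ?thesis by (simp only: add_0_right)
  qed
  have a: "\<forall>i\<le>d. subspace (Vs (d - i)) \<and> dim (Vs (d - i)) = 1"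
    using dec_sub[OF D] dec_dim[OF D] by simp
  have b: "\<forall>v. \<exists>ws. (\<forall>j\<le>d. ws j \<in> Vs (d - j)) \<and> v = (\<Sum>j\<in>{0..d}. ws j)"
  proof
    fix v
    obtain ws where ws: "\<forall>j\<le>d. ws j \<in> Vs j" "v = (\<Sum>j\<in>{0..d}. ws j)"
      using D unfolding is_decomposition_def by blast
    have m1: "\<forall>j\<le>d. ws (d - j) \<in> Vs (d - j)"
    proof (intro allI impI)
      fix j :: nat
      have "d - j \<le> d" by simp
      then show "ws (d - j) \<in> Vs (d - j)" using ws(1) by blast
    qed
    have m2: "v = (\<Sum>j\<in>{0..d}. ws (d - j))" using ws(2) rv[of ws] by (rule trans)
    show "\<exists>ws. (\<forall>j\<le>d. ws j \<in> Vs (d - j)) \<and> v = (\<Sum>j\<in>{0..d}. ws j)"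
      by (rule exI[of _ "\<lambda>j. ws (d - j)"], rule conjI, rule m1, rule m2)
  qed
  have U: "\<forall>ws. (\<forall>j\<le>d. ws j \<in> Vs j) \<and> (\<Sum>j\<in>{0..d}. ws j) = 0 \<longrightarrow> (\<forall>j\<le>d. ws j = 0)"
    using D unfolding is_decomposition_def by (elim conjE)
  have c: "\<forall>ws. (\<forall>j\<le>d. ws j \<in> Vs (d - j)) \<and> (\<Sum>j\<in>{0..d}. ws j) = 0 \<longrightarrow> (\<forall>j\<le>d. ws j = 0)"
  proof (intro allI impI)
    fix ws j assume h: "(\<forall>j\<le>d. ws j \<in> Vs (d - j)) \<and> (\<Sum>j\<in>{0..d}. ws j) = 0" and j: "j \<le> d"
    have m: "\<forall>k\<le>d. ws (d - k) \<in> Vs k"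
    proof (intro allI impI)
      fix k assume k: "k \<le> d"
      have "d - k \<le> d" by simp
      then have "ws (d - k) \<in> Vs (d - (d - k))" using h by blast
      moreover have "d - (d - k) = k" using k by simp
      ultimately show "ws (d - k) \<in> Vs k" by simp
    qed
    have "(\<Sum>k\<in>{0..d}. ws (d - k)) = 0" using rv[of ws] h by (elim conjE) (rule trans[OF sym])
    then have "\<forall>k\<le>d. ws (d - k) = 0" using spec[OF U, of "\<lambda>k. ws (d - k)"] m by blast
    then have "ws (d - (d - j)) = 0" by simp
    then show "ws j = 0" using j by simp
  qed
  show ?thesis unfolding is_decomposition_def by (intro conjI a b c)
qed

lemma main7:
  assumes lA: "Vector_Spaces.linear scale scale A" and lB: "Vector_Spaces.linear scale scale B"
    and D: "is_decomposition scale d Vs" and low: "lowers d A Vs" and rai: "raises d B Vs"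
    and par: "\<forall>i\<in>{1..d}. \<forall>v\<in>Vs i. B (A v) = scale (\<phi> i) v"
    and cdef: "c = (\<lambda>i. (\<Prod>j\<in>{1..i}. \<phi> j) / (\<Prod>j\<in>{1..i}. \<phi> (d + 1 - j)))"
  shows "bij (diagm d Vs c)
    \<and> LR_pair scale d A (inv (diagm d Vs c) \<circ> B \<circ> diagm d Vs c)
    \<and> LR_pair scale d B A
    \<and> LR_pair scale d (diagm d Vs c \<circ> A \<circ> inv (diagm d Vs c)) B
    \<and> LR_iso scale d A (inv (diagm d Vs c) \<circ> B \<circ> diagm d Vs c) B A
    \<and> LR_iso scale d B A (diagm d Vs c \<circ> A \<circ> inv (diagm d Vs c)) B
    \<and> LR_iso scale d A (inv (diagm d Vs c) \<circ> B \<circ> diagm d Vs c) (diagm d Vs c \<circ> A \<circ> inv (diagm d Vs c)) B"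
proof -
  define \<psi> where "\<psi> i = \<phi> (d + 1 - i)" for i
  have L0: "LRd d A B Vs \<phi>" unfolding LRd_def using lA lB D low rai par by blast
  have pnz: "\<phi> j \<noteq> 0" if "j \<in> {1..d}" for j using LR_param_nz[OF L0 that] .
  have cnz: "\<forall>i\<le>d. c i \<noteq> 0"
  proof (intro allI impI)
    fix i assume i: "i \<le> d"
    have "(\<Prod>j\<in>{1..i}. \<phi> j) \<noteq> 0" using pnz i by (simp add: prod_zero_iff)
    moreover have "(\<Prod>j\<in>{1..i}. \<phi> (d + 1 - j)) \<noteq> 0"
    proof -
      have "\<forall>j\<in>{1..i}. \<phi> (d + 1 - j) \<noteq> 0"
      proof
        fix j assume "j \<in> {1..i}"
        then have "d + 1 - j \<in> {1..d}" using i by auto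
        then show "\<phi> (d + 1 - j) \<noteq> 0" by (rule pnz)
      qed
      then show ?thesis by (simp add: prod_zero_iff)
    qed
    ultimately show "c i \<noteq> 0" unfolding cdef by simp
  qed
  have crec: "inverse (c i) * c (i - 1) * \<phi> i = \<psi> i" if i: "i \<in> {1..d}" for i
  proof -
    obtain k where k: "i = Suc k" using i by (cases i) auto
    have kd: "k < d" using i k by auto
    have P1: "(\<Prod>j\<in>{1..Suc k}. \<phi> j) = \<phi> (Suc k) * (\<Prod>j\<in>{1..k}. \<phi> j)"
      by (rule prod.nat_ivl_Suc') simp
    have P2: "(\<Prod>j\<in>{1..Suc k}. \<phi> (d + 1 - j)) = \<phi> (d - k) * (\<Prod>j\<in>{1..k}. \<phi> (d + 1 - j))"
      by (subst prod.nat_ivl_Suc') simp_all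
    have n1: "\<phi> (Suc k) \<noteq> 0" "\<phi> (d - k) \<noteq> 0" using pnz kd by auto
    have n2: "c k \<noteq> 0" using cnz kd by auto
    have cs: "c (Suc k) = c k * (\<phi> (Suc k) / \<phi> (d - k))"
      unfolding cdef P1 P2 by (simp add: field_simps)
    have "inverse (c (Suc k)) * c k * \<phi> (Suc k) = \<phi> (d - k)"
      unfolding cs using n1 n2 by (simp add: field_simps)
    moreover have "\<psi> (Suc k) = \<phi> (d - k)" by (simp add: \<psi>_def)
    ultimately show ?thesis using k by simp
  qed
  define \<Psi> where "\<Psi> = diagm d Vs c"
  define \<Psi>i where "\<Psi>i = diagm d Vs (\<lambda>i. inverse (c i))"
  have bijP: "bij \<Psi>" and invP: "inv \<Psi> = \<Psi>i"
    using diagm_inv[OF D cnz] unfolding \<Psi>_def \<Psi>i_def by auto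
  have lP: "Vector_Spaces.linear scale scale \<Psi>" unfolding \<Psi>_def by (rule diagm_linear[OF D])
  have lPi: "Vector_Spaces.linear scale scale \<Psi>i" unfolding \<Psi>i_def by (rule diagm_linear[OF D])
  have Pon: "\<Psi> w = scale (c i) w" if "i \<le> d" "w \<in> Vs i" for i w
    unfolding \<Psi>_def using diagm_on[OF D that(2) that(1)] .
  have Pion: "\<Psi>i w = scale (inverse (c i)) w" if "i \<le> d" "w \<in> Vs i" for i w
    unfolding \<Psi>i_def using diagm_on[OF D that(2) that(1)] .
  have rai1: "B ` Vs i = Vs (Suc i)" if "i < d" for i using rai that by (simp add: raises_def)
  have raid: "B ` Vs d = {0}" using rai by (simp add: raises_def)
  have lowi: "A ` Vs i = Vs (i - 1)" if "i \<in> {1..d}" for i using low that by (simp add: lowers_def)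
  have low0: "A ` Vs 0 = {0}" using low by (simp add: lowers_def)
  have sub: "subspace (Vs i)" if "i \<le> d" for i using dec_sub[OF D that] .
  define B' where "B' = \<Psi>i \<circ> B \<circ> \<Psi>"
  define A' where "A' = \<Psi> \<circ> A \<circ> \<Psi>i"
  have lB': "Vector_Spaces.linear scale scale B'" unfolding B'_def
    by (intro lin_comp lPi lB lP)
  have lA': "Vector_Spaces.linear scale scale A'" unfolding A'_def
    by (intro lin_comp lPi lA lP)
  have B'on: "B' w = scale (inverse (c (Suc i)) * c i) (B w)" if "i < d" "w \<in> Vs i" for i w
  proof -
    have "B w \<in> Vs (Suc i)" using rai1[OF that(1)] that(2) by blast
    then show ?thesis unfolding B'_def o_def
      using Pon[of i w] Pion[of "Suc i" "B w"] that lin_scale[OF lB] lin_scale[OF lPi] by (simp add: mult.commute)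
  qed
  have B'd: "B' w = 0" if "w \<in> Vs d" for w
  proof -
    have "B w = 0" using raid that by blast
    then show ?thesis unfolding B'_def o_def
      using Pon[of d w] that lin_scale[OF lB] lin_0[OF lPi] lin_scale[OF lPi] by simp
  qed
  have A'on: "A' w = scale (c (i - 1) * inverse (c i)) (A w)" if "i \<in> {1..d}" "w \<in> Vs i" for i w
  proof -
    have "A w \<in> Vs (i - 1)" using lowi[OF that(1)] that(2) by blast
    moreover have "i - 1 \<le> d" using that(1) by auto
    ultimately show ?thesis unfolding A'_def o_def
      using Pion[of i w] Pon[of "i - 1" "A w"] that lin_scale[OF lA] lin_scale[OF lP] by (simp add: mult.commute)
  qed
  have A'0: "A' w = 0" if "w \<in> Vs 0" for w
  proof -
    have "A w = 0" using low0 that by blast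
    then show ?thesis unfolding A'_def o_def
      using Pion[of 0 w] that lin_scale[OF lA] lin_0[OF lP] lin_scale[OF lP] by simp
  qed
  have L1: "LRd d A B' Vs \<psi>"
    unfolding LRd_def
  proof (intro conjI lA lB' D low)
    show "raises d B' Vs" unfolding raises_def
    proof (intro conjI ballI allI impI)
      fix i assume i: "i < d"
      have S: "subspace (Vs (Suc i))" using sub i by auto
      have k: "inverse (c (Suc i)) * c i \<noteq> 0" using cnz i by auto
      have f: "\<forall>w\<in>Vs i. B' w = scale (inverse (c (Suc i)) * c i) (B w)" using B'on i by blast
      have "B' ` Vs i = Vs (Suc i)" by (rule img_scale[OF S k f rai1[OF i]])
      then show "B' ` Vs i = Vs (i + 1)" by simp
    next
      show "B' ` Vs d = {0}" by (rule img_zero) (use B'd subspace_0[OF sub[of d]] in auto)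
    qed
    show "\<forall>i\<in>{1..d}. \<forall>v\<in>Vs i. B' (A v) = scale (\<psi> i) v"
    proof (intro ballI)
      fix i v assume i: "i \<in> {1..d}" and v: "v \<in> Vs i"
      have Av: "A v \<in> Vs (i - 1)" using lowi[OF i] v by blast
      have "B' (A v) = scale (inverse (c (Suc (i - 1))) * c (i - 1)) (B (A v))"
      proof -
        have "i - 1 < d" using i by auto
        then show ?thesis using B'on[OF _ Av] by simp
      qed
      also have "\<dots> = scale (inverse (c i) * c (i - 1) * \<phi> i) v" using par i v by simp
      also have "\<dots> = scale (\<psi> i) v" using crec[OF i] by simp
      finally show "B' (A v) = scale (\<psi> i) v" .
    qed
  qed
  have L3: "LRd d A' B Vs \<psi>"
    unfolding LRd_def
  proof (intro conjI lA' lB D rai)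
    show "lowers d A' Vs" unfolding lowers_def
    proof (intro conjI ballI)
      fix i assume i: "i \<in> {1..d}"
      have S: "subspace (Vs (i - 1))" using sub i by auto
      have k: "c (i - 1) * inverse (c i) \<noteq> 0" using cnz i by auto
      have f: "\<forall>w\<in>Vs i. A' w = scale (c (i - 1) * inverse (c i)) (A w)" using A'on i by blast
      show "A' ` Vs i = Vs (i - 1)" by (rule img_scale[OF S k f lowi[OF i]])
    next
      show "A' ` Vs 0 = {0}" by (rule img_zero) (use A'0 subspace_0[OF sub[of 0]] in auto)
    qed
    show "\<forall>i\<in>{1..d}. \<forall>v\<in>Vs i. B (A' v) = scale (\<psi> i) v"
    proof (intro ballI)
      fix i v assume i: "i \<in> {1..d}" and v: "v \<in> Vs i"
      have "B (A' v) = scale (c (i - 1) * inverse (c i)) (B (A v))"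
        using A'on[OF i v] lin_scale[OF lB] by simp
      also have "\<dots> = scale (inverse (c i) * c (i - 1) * \<phi> i) v" using par i v by (simp add: mult.commute)
      also have "\<dots> = scale (\<psi> i) v" using crec[OF i] by simp
      finally show "B (A' v) = scale (\<psi> i) v" .
    qed
  qed
  have L2: "LRd d B A (\<lambda>i. Vs (d - i)) \<psi>"
    unfolding LRd_def
  proof (intro conjI lA lB rev_dec[OF D])
    show "lowers d B (\<lambda>i. Vs (d - i))" unfolding lowers_def
    proof (intro conjI ballI)
      fix i assume i: "i \<in> {1..d}"
      have "B ` Vs (d - i) = Vs (Suc (d - i))" using rai1[of "d - i"] i by auto
      moreover have "Suc (d - i) = d - (i - 1)" using i by auto
      ultimately show "B ` Vs (d - i) = Vs (d - (i - 1))" by simp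
    next
      show "B ` Vs (d - 0) = {0}" using raid by simp
    qed
    show "raises d A (\<lambda>i. Vs (d - i))" unfolding raises_def
    proof (intro conjI allI impI)
      fix i assume i: "i < d"
      have "A ` Vs (d - i) = Vs (d - i - 1)" using lowi[of "d - i"] i by auto
      moreover have "d - i - 1 = d - (i + 1)" by simp
      ultimately show "A ` Vs (d - i) = Vs (d - (i + 1))" by simp
    next
      show "A ` Vs (d - d) = {0}" using low0 by simp
    qed
    show "\<forall>i\<in>{1..d}. \<forall>v\<in>Vs (d - i). A (B v) = scale (\<psi> i) v"
    proof (intro ballI)
      fix i v assume i: "i \<in> {1..d}" and v: "v \<in> Vs (d - i)"
      have j: "d + 1 - i \<in> {1..d}" using i by auto
      have "A ` Vs (d + 1 - i) = Vs (d - i)" using lowi[OF j] i by auto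
      then obtain w where w: "w \<in> Vs (d + 1 - i)" "v = A w" using v by force
      have "A (B v) = A (scale (\<phi> (d + 1 - i)) w)" using par j w by simp
      also have "\<dots> = scale (\<psi> i) v" using w lin_scale[OF lA] by (simp add: \<psi>_def)
      finally show "A (B v) = scale (\<psi> i) v" .
    qed
  qed
  have eB': "inv (diagm d Vs c) \<circ> B \<circ> diagm d Vs c = B'"
    using invP unfolding B'_def \<Psi>_def by simp
  have eA': "diagm d Vs c \<circ> A \<circ> inv (diagm d Vs c) = A'"
    using invP unfolding A'_def \<Psi>_def by simp
  have bij': "bij (diagm d Vs c)" using bijP unfolding \<Psi>_def .
  show ?thesis unfolding eB' eA'
    by (intro conjI bij' LRd_pair[OF L1] LRd_pair[OF L2] LRd_pair[OF L3]
      LRd_iso[OF L1 L2] LRd_iso[OF L2 L3] LRd_iso[OF L1 L3])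
qed

end

theorem proposition7p19:
  fixes scale :: "'a::field \<Rightarrow> 'v::ab_group_add \<Rightarrow> 'v"
    and d :: nat and A B :: "'v \<Rightarrow> 'v" and Vs :: "nat \<Rightarrow> 'v set" and \<phi> :: "nat \<Rightarrow> 'a"
  assumes "vector_space scale"
    and "Vector_Spaces.linear scale scale A" and "Vector_Spaces.linear scale scale B"
    and "is_decomposition scale d Vs" and "lowers d A Vs" and "raises d B Vs"
    and "\<forall>i\<in>{1..d}. \<forall>v\<in>Vs i. B (A v) = scale (\<phi> i) v"
  defines "\<Psi> \<equiv> (\<lambda>v. \<Sum>i\<in>{0..d}.
      scale ((\<Prod>j\<in>{1..i}. \<phi> j) / (\<Prod>j\<in>{1..i}. \<phi> (d + 1 - j))) (proj d Vs i v))"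
  shows "bij \<Psi>
    \<and> LR_pair scale d A (inv \<Psi> \<circ> B \<circ> \<Psi>)
    \<and> LR_pair scale d B A
    \<and> LR_pair scale d (\<Psi> \<circ> A \<circ> inv \<Psi>) B
    \<and> LR_iso scale d A (inv \<Psi> \<circ> B \<circ> \<Psi>) B A
    \<and> LR_iso scale d B A (\<Psi> \<circ> A \<circ> inv \<Psi>) B
    \<and> LR_iso scale d A (inv \<Psi> \<circ> B \<circ> \<Psi>) (\<Psi> \<circ> A \<circ> inv \<Psi>) B"
proof -
  interpret vector_space scale by (rule assms(1))
  have eq: "\<Psi> = diagm d Vs (\<lambda>i. (\<Prod>j\<in>{1..i}. \<phi> j) / (\<Prod>j\<in>{1..i}. \<phi> (d + 1 - j)))"
    unfolding \<Psi>_def diagm_def by (rule refl)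
  show ?thesis unfolding eq
    by (rule main7[OF assms(2) assms(3) assms(4) assms(5) assms(6) assms(7) refl])
qed

end
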